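(* Let $F$ be a continuous distribution on $[0,\infty)$ such that either $F\in\mathcal L\setminus\mathcal S$, or $F\in\mathcal L(\gamma)$ for some $\gamma>0$. Then there exists a discontinuous distribution $G$ on $[0,\infty)$ with unbounded support such that, denoting by $H$ the distribution of $XY$ where $X\sim F$ and $Y\sim G$ are independent, we have $G\notin\mathcal L$ and $H\in\mathcal S$, while there is no $t\ge1$ with $\overline H(x)=O\big(\overline F(x/t)\big)$ and there is no $d\in D[G]$ with $\overline H(x)=O\big(\overline F(x/d)\big)$.
   Context: For a distribution $V$, $\overline V=1-V$ denotes its tail. All limits are as $x\to\infty$. For positive functions $f,g$: $f(x)\sim g(x)$ means $f(x)/g(x)\to1$, and $f(x)=O(g(x))$ means $\limsup f(x)/g(x)<\infty$. $D[V]$ denotes the set of all positive points of discontinuity of the distribution $V$. For $\gamma\ge0$, a distribution $V$ belongs to $\mathcal L(\gamma)$ if $\overline V(x)>0$ for all $x$ and $\overline V(x-t)\sim e^{\gamma t}\overline V(x)$ for every real $t$ (for $\gamma>0$ and $V$ lattice, $x,t$ restricted to multiples of the lattice span); $\mathcal L=\mathcal L(0)$ is the class of long-tailed distributions. A distribution $V$ on $[0,\infty)$ is subexponential, written $V\in\mathcal S$, if $\overline V(x)>0$ for all $x$ and $\overline{V*V}(x)\sim 2\overline V(x)$, where $V*V$ is the distribution of the sum of two independent copies of a random variable with distribution $V$. *)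

theory Defs
  imports "HOL-Probability.Probability" "HOL-Library.Landau_Symbols"
begin

definition is_distr :: "real measure \<Rightarrow> bool" where
  "is_distr V \<longleftrightarrow> prob_space V \<and> sets V = sets borel"

definition distr_nonneg :: "real measure \<Rightarrow> bool" where
  "distr_nonneg V \<longleftrightarrow> is_distr V \<and> measure V {..<0} = 0"

definition tail :: "real measure \<Rightarrow> real \<Rightarrow> real" where
  "tail V x = 1 - measure V {..x}"

definition disc_points :: "real measure \<Rightarrow> real set" where
  "disc_points V = {d. d > 0 \<and> measure V {d} > 0}"

definition continuous_distr :: "real measure \<Rightarrow> bool" where
  "continuous_distr V \<longleftrightarrow> (\<forall>x. measure V {x} = 0)"

definition lattice_with :: "real measure \<Rightarrow> real \<Rightarrow> bool" where
  "lattice_with V h \<longleftrightarrow> h > 0 \<and> measure V {x. \<exists>k::int. x = of_int k * h} = 1"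

definition lattice_distr :: "real measure \<Rightarrow> bool" where
  "lattice_distr V \<longleftrightarrow> (\<exists>h. lattice_with V h)"

definition lattice_span :: "real measure \<Rightarrow> real \<Rightarrow> bool" where
  "lattice_span V h \<longleftrightarrow> lattice_with V h \<and> (\<forall>h'. lattice_with V h' \<longrightarrow> h' \<le> h)"

text \<open>The class L(gamma); for gamma > 0 and V lattice, x and t range over multiples of the span.\<close>
definition class_L :: "real \<Rightarrow> real measure \<Rightarrow> bool" where
  "class_L \<gamma> V \<longleftrightarrow> is_distr V \<and> (\<forall>x. tail V x > 0) \<and>
     (if \<gamma> > 0 \<and> lattice_distr V then
        (\<forall>h. lattice_span V h \<longrightarrow> (\<forall>k::int.
           (\<lambda>n::nat. tail V (real n * h - of_int k * h)) \<sim>[sequentially]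
           (\<lambda>n. exp (\<gamma> * (of_int k * h)) * tail V (real n * h))))
      else
        (\<forall>t::real. (\<lambda>x. tail V (x - t)) \<sim>[at_top] (\<lambda>x. exp (\<gamma> * t) * tail V x)))"

abbreviation long_tailed :: "real measure \<Rightarrow> bool" where
  "long_tailed V \<equiv> class_L 0 V"

definition subexponential :: "real measure \<Rightarrow> bool" where
  "subexponential V \<longleftrightarrow> distr_nonneg V \<and> (\<forall>x. tail V x > 0) \<and>
     (\<lambda>x. tail (V \<star> V) x) \<sim>[at_top] (\<lambda>x. 2 * tail V x)"

definition product_distr :: "real measure \<Rightarrow> real measure \<Rightarrow> real measure" where
  "product_distr F G = distr (F \<Otimes>\<^sub>M G) borel (\<lambda>(x, y). x * y)"

end

theory Submission
  imports Defs "HOL-Real_Asymp.Real_Asymp"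
begin


lemma distr_rd: "is_distr V \<Longrightarrow> real_distribution V"
  unfolding is_distr_def real_distribution_def real_distribution_axioms_def by auto

lemma tail_alt: assumes "is_distr V" shows "tail V x = measure V {x<..}"
proof -
  interpret real_distribution V using distr_rd[OF assms] .
  have "measure V {x<..} = measure V (space V - {..x})" by (rule arg_cong[where f="measure V"]) auto
  also have "\<dots> = 1 - measure V {..x}" by (rule prob_compl) simp
  finally show ?thesis unfolding tail_def by simp
qed

lemma tail_nonneg: "is_distr V \<Longrightarrow> tail V x \<ge> 0"
  by (simp add: tail_alt)

lemma tail_le1: assumes "is_distr V" shows "tail V x \<le> 1"
proof -
  interpret real_distribution V using distr_rd[OF assms] .
  show ?thesis unfolding tail_def by simp
qed

lemma tail_mono: assumes "is_distr V" "x \<le> y" shows "tail V y \<le> tail V x"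
proof -
  interpret real_distribution V using distr_rd[OF assms(1)] .
  show ?thesis unfolding tail_def using finite_measure_mono[of "{..x}" "{..y}"] assms(2) by auto
qed

lemma tail_lim: assumes "is_distr V" shows "(tail V \<longlongrightarrow> 0) at_top"
proof -
  interpret real_distribution V using distr_rd[OF assms(1)] .
  have "((\<lambda>x. 1 - cdf V x) \<longlongrightarrow> 1 - 1) at_top"
    by (intro tendsto_intros cdf_lim_at_top_prob)
  thus ?thesis unfolding tail_def cdf_def by simp
qed



lemma ratio_shift_nat:
  fixes T :: "real \<Rightarrow> real"
  assumes pos: "\<And>x. T x > 0"
  and L1: "((\<lambda>x. T (x - 1) / T x) \<longlongrightarrow> 1) at_top"
  shows "((\<lambda>x. T (x - real n) / T x) \<longlongrightarrow> 1) at_top"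
proof (induction n)
  case 0 then show ?case using pos by (simp add: less_imp_neq[symmetric])
next
  case (Suc n)
  have lim: "filterlim (\<lambda>x::real. x - 1) at_top at_top"
    by real_asymp
  have "((\<lambda>x. T ((x - 1) - real n) / T (x - 1)) \<longlongrightarrow> 1) at_top"
    using filterlim_compose[OF Suc lim] by simp
  hence lim2: "((\<lambda>x. (T ((x - 1) - real n) / T (x - 1)) * (T (x - 1) / T x)) \<longlongrightarrow> 1 * 1) at_top"
    by (intro tendsto_mult L1)
  have eq: "\<And>x. (T ((x - 1) - real n) / T (x - 1)) * (T (x - 1) / T x) = T (x - real (Suc n)) / T x"
  proof -
    fix x have "T (x - 1) \<noteq> 0" using pos[of "x-1"] by simp
    thus "(T ((x - 1) - real n) / T (x - 1)) * (T (x - 1) / T x) = T (x - real (Suc n)) / T x"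
      by (simp add: algebra_simps)
  qed
  have eqf: "(\<lambda>x. (T ((x - 1) - real n) / T (x - 1)) * (T (x - 1) / T x)) = (\<lambda>x. T (x - real (Suc n)) / T x)"
    using eq by (rule ext)
  from lim2[unfolded eqf mult_1] show ?case .
qed

lemma ratio_shift:
  fixes T :: "real \<Rightarrow> real"
  assumes pos: "\<And>x. T x > 0" and mono: "\<And>x y. x \<le> y \<Longrightarrow> T y \<le> T x"
  and L1: "((\<lambda>x. T (x - 1) / T x) \<longlongrightarrow> 1) at_top" and a: "a \<ge> 0"
  shows "((\<lambda>x. T (x - a) / T x) \<longlongrightarrow> 1) at_top"
proof -
  obtain n :: nat where n: "a \<le> real n" using real_arch_simple by blast
  have up: "((\<lambda>x. T (x - real n) / T x) \<longlongrightarrow> 1) at_top" by (rule ratio_shift_nat[OF pos L1])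
  show ?thesis
  proof (rule tendsto_sandwich[OF _ _ tendsto_const up])
    show "\<forall>\<^sub>F x in at_top. 1 \<le> T (x - a) / T x"
      using pos mono a by (intro always_eventually allI) (simp add: le_divide_eq)
    show "\<forall>\<^sub>F x in at_top. T (x - a) / T x \<le> T (x - real n) / T x"
      using pos mono n by (intro always_eventually allI divide_right_mono) (auto intro: less_imp_le)
  qed
qed



lemma goldie:
  fixes V :: "real measure" and C :: real
  assumes nn: "distr_nonneg V" and pos: "\<And>x. tail V x > 0"
  and L: "\<And>a. a \<ge> 0 \<Longrightarrow> ((\<lambda>x. tail V (x - a) / tail V x) \<longlongrightarrow> 1) at_top"
  and C: "C \<ge> 0" and D: "\<And>x. tail V (x/2) \<le> C * tail V x"
  shows "subexponential V"
proof -
  have dV: "is_distr V" using nn unfolding distr_nonneg_def by auto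
  interpret V: real_distribution V using distr_rd[OF dV] .
  interpret Q: pair_prob_space V V by unfold_locales
  let ?Q = "V \<Otimes>\<^sub>M V"
  have setsQ: "sets ?Q = sets (borel :: (real \<times> real) measure)"
    by (metis V.events_eq_borel borel_prod sets_pair_measure_cong)
  have spQ: "space ?Q = UNIV" by (simp add: space_pair_measure)
  define Vb where "Vb = tail V"
  have Vb: "\<And>x. Vb x = measure V {x<..}" unfolding Vb_def using tail_alt[OF dV] by simp
  have sb[measurable]: "\<And>A. A \<in> sets borel \<Longrightarrow> A \<in> sets ?Q" using setsQ by simp
  have times: "\<And>A B. A \<in> sets borel \<Longrightarrow> B \<in> sets borel \<Longrightarrow> measure ?Q (A \<times> B) = measure V A * measure V B"
    by (simp add: V.emeasure_pair_measure_Times measure_def enn2real_mult)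
  have hs[simp]: "{p::real\<times>real. x < fst p + snd p} \<in> sets ?Q" for x
  proof -
    have "open {p::real\<times>real. x < fst p + snd p}"
      by (intro open_Collect_less continuous_intros)
    thus ?thesis using sb borel_open by blast
  qed
  have rect[simp]: "A \<in> sets borel \<Longrightarrow> B \<in> sets borel \<Longrightarrow> A \<times> B \<in> sets (borel \<Otimes>\<^sub>M borel)"
    for A B :: "real set" by (rule pair_measureI)
  have NQ': "N \<in> sets (borel \<Otimes>\<^sub>M borel)" if "N \<in> sets ?Q" for N using that setsQ by (metis V.events_eq_borel sets_pair_measure_cong)
  have P1: "measure V UNIV = 1" using V.prob_space by simp
  have setsQ2: "sets ?Q = sets (borel \<Otimes>\<^sub>M (borel::real measure))"
    by (metis V.events_eq_borel sets_pair_measure_cong)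
  have hs'[simp]: "{p::real\<times>real. x < fst p + snd p} \<in> sets (borel \<Otimes>\<^sub>M borel)" for x
    using hs[of x] setsQ2 by simp
  define s where "s x = measure ?Q {p. x < fst p + snd p}" for x
  have conv: "tail (V \<star> V) x = s x" for x
  proof -
    have "measure (V \<star> V) {..x} = measure ?Q ((\<lambda>(a, b). a + b) -` {..x} \<inter> space ?Q)"
      unfolding convolution_def by (rule measure_distr) auto
    also have "\<dots> = measure ?Q (space ?Q - {p. x < fst p + snd p})"
      by (rule arg_cong[where f="measure ?Q"]) (auto simp: spQ)
    also have "\<dots> = 1 - s x" unfolding s_def by (rule Q.prob_compl[OF hs])
    finally show ?thesis unfolding tail_def by simp
  qed
  define N where "N = ({..<0::real} \<times> (UNIV::real set)) \<union> (UNIV \<times> {..<0})"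
  have N0: "measure V {..<0} = 0" using nn unfolding distr_nonneg_def by auto
  have Nm: "measure ?Q N = 0"
  proof -
    have "measure ?Q N \<le> measure ?Q ({..<0::real} \<times> (UNIV::real set)) + measure ?Q (UNIV \<times> {..<0})"
      unfolding N_def by (rule measure_Un_le) auto
    also have "\<dots> = 0" by (simp add: times N0)
    finally show ?thesis by (simp add: measure_nonneg order_antisym)
  qed
  have NQ: "N \<in> sets ?Q" unfolding N_def by simp
  have upper: "s x \<le> 2 * Vb (x - a) + 2 * Vb (x/2) * Vb a" for x a
  proof -
    let ?A1 = "{x - a<..} \<times> (UNIV::real set)" and ?A2 = "(UNIV::real set) \<times> {x - a<..}"
    let ?A3 = "{x/2<..} \<times> {a<..}" and ?A4 = "{a<..} \<times> {x/2<..}"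
    have sub: "{p. x < fst p + snd p} \<subseteq> ?A1 \<union> ?A2 \<union> ?A3 \<union> ?A4 \<union> N"
      unfolding N_def by auto
    have "s x \<le> measure ?Q (?A1 \<union> ?A2 \<union> ?A3 \<union> ?A4 \<union> N)"
      unfolding s_def by (rule Q.finite_measure_mono[OF sub]) (use NQ in \<open>auto simp: N_def\<close>)
    also have "\<dots> \<le> measure ?Q (?A1 \<union> ?A2 \<union> ?A3 \<union> ?A4) + measure ?Q N"
      by (rule measure_Un_le) (use NQ in \<open>auto simp: N_def\<close>)
    also have "measure ?Q (?A1 \<union> ?A2 \<union> ?A3 \<union> ?A4) \<le> measure ?Q (?A1 \<union> ?A2 \<union> ?A3) + measure ?Q ?A4"
      by (rule measure_Un_le) auto
    also have "measure ?Q (?A1 \<union> ?A2 \<union> ?A3) \<le> measure ?Q (?A1 \<union> ?A2) + measure ?Q ?A3"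
      by (rule measure_Un_le) auto
    also have "measure ?Q (?A1 \<union> ?A2) \<le> measure ?Q ?A1 + measure ?Q ?A2"
      by (rule measure_Un_le) auto
    finally show ?thesis by (simp add: times Nm Vb[symmetric] algebra_simps P1)
  qed
  have lower: "s x \<ge> 2 * Vb x - Vb x * Vb x" for x
  proof -
    let ?A1 = "{x<..} \<times> (UNIV::real set)" and ?A2 = "(UNIV::real set) \<times> {x<..}"
    have sub: "?A1 \<union> ?A2 \<subseteq> {p. x < fst p + snd p} \<union> N" unfolding N_def by auto
    have e1: "measure ?Q (?A1 \<union> ?A2) = measure ?Q ?A1 + measure ?Q (?A2 - ?A1)"
      by (rule Q.finite_measure_Union') auto
    have e2: "?A2 - ?A1 = {..x} \<times> {x<..}" by auto
    have e3: "measure V {..x} = 1 - Vb x" unfolding Vb_def tail_def by simp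
    have eq: "measure ?Q (?A1 \<union> ?A2) = Vb x + (1 - Vb x) * Vb x"
      unfolding e1 e2 by (simp add: times Vb[symmetric] P1 e3)
    have "measure ?Q (?A1 \<union> ?A2) \<le> measure ?Q ({p. x < fst p + snd p} \<union> N)"
      by (rule Q.finite_measure_mono[OF sub]) (use NQ in \<open>auto simp: N_def\<close>)
    also have "\<dots> \<le> s x + measure ?Q N" unfolding s_def by (rule measure_Un_le) (use NQ in \<open>auto simp: N_def\<close>)
    finally show ?thesis using eq Nm by (simp add: algebra_simps)
  qed
  have Vpos: "\<And>x. Vb x > 0" using pos Vb_def by simp
  have V0: "(Vb \<longlongrightarrow> 0) at_top" unfolding Vb_def by (rule tail_lim[OF dV])
  have lim: "((\<lambda>x. s x / (2 * Vb x)) \<longlongrightarrow> 1) at_top"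
  proof (rule tendstoI)
    fix e :: real assume e: "e > 0"
    have "\<forall>\<^sub>F a in at_top. Vb a < e / (2 * (C + 1))"
      using V0 e C by (intro order_tendstoD) auto
    then obtain a where a0: "a \<ge> 0" and aV: "Vb a < e / (2 * (C + 1))"
      by (metis eventually_at_top_linorder linorder_le_cases order_refl)
    have Ca: "C * Vb a \<le> e / 2"
    proof -
      have "C * Vb a \<le> (C + 1) * Vb a" using Vpos[of a] by (intro mult_right_mono) auto
      also have "\<dots> \<le> (C + 1) * (e / (2 * (C + 1)))" using aV C by (intro mult_left_mono) auto
      also have "\<dots> = e / 2" using C by (simp add: field_simps)
      finally show ?thesis .
    qed
    have ev1: "\<forall>\<^sub>F x in at_top. Vb (x - a) / Vb x < 1 + e / 2"
      using L[OF a0] e unfolding Vb_def by (intro order_tendstoD) auto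
    have ev2: "\<forall>\<^sub>F x in at_top. Vb x < e"
      using V0 e by (intro order_tendstoD) auto
    show "\<forall>\<^sub>F x in at_top. dist (s x / (2 * Vb x)) 1 < e"
      using ev1 ev2
    proof eventually_elim
      case (elim x)
      have vx: "Vb x > 0" by (rule Vpos)
      have "s x / (2 * Vb x) \<le> (2 * Vb (x - a) + 2 * Vb (x/2) * Vb a) / (2 * Vb x)"
        using upper[of x a] vx by (intro divide_right_mono) auto
      also have "\<dots> = Vb (x - a) / Vb x + Vb (x/2) * Vb a / Vb x"
        using vx by (simp add: field_simps)
      also have "Vb (x/2) * Vb a / Vb x \<le> C * Vb a"
      proof -
        have "Vb (x/2) * Vb a \<le> (C * Vb x) * Vb a" using D[of x] Vpos[of a] unfolding Vb_def
          by (intro mult_right_mono) auto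
        thus ?thesis using vx by (simp add: field_simps)
      qed
      finally have up: "s x / (2 * Vb x) < 1 + e" using elim Ca by linarith
      have "(2 * Vb x - Vb x * Vb x) / (2 * Vb x) \<le> s x / (2 * Vb x)"
        using lower[of x] vx by (intro divide_right_mono) auto
      moreover have "(2 * Vb x - Vb x * Vb x) / (2 * Vb x) = 1 - Vb x / 2"
        using vx by (simp add: field_simps)
      ultimately have lo: "s x / (2 * Vb x) > 1 - e" using elim e by linarith
      show ?case using up lo by (simp add: dist_real_def abs_less_iff)
    qed
  qed
  have "(\<lambda>x. tail (V \<star> V) x) \<sim>[at_top] (\<lambda>x. 2 * tail V x)"
    by (rule asymp_equivI') (use lim in \<open>simp add: conv Vb_def\<close>)
  thus ?thesis unfolding subexponential_def using nn pos by auto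
qed



definition pp :: "nat \<Rightarrow> real" where "pp n = (1/2)^(Suc n)"
definition GG :: "real measure" where
  "GG = distr (measure_pmf (geometric_pmf (1/2))) borel (\<lambda>n. 2^n)"

lemma pp_pos: "pp n > 0" by (simp add: pp_def)

lemma pp_sums: "pp sums 1"
proof -
  have "(\<lambda>n. (1/2::real) * (1/2)^n) sums ((1/2) * (1 / (1 - 1/2)))"
    by (intro sums_mult geometric_sums) simp
  moreover have "pp = (\<lambda>n. (1/2::real) * (1/2)^n)" by (rule ext) (simp add: pp_def)
  ultimately show ?thesis by simp
qed

lemma pp_summable: "summable pp" using pp_sums by (rule sums_summable)

lemma sets_GG[simp]: "sets GG = sets borel" by (simp add: GG_def)
lemma space_GG[simp]: "space GG = UNIV" by (simp add: GG_def)

lemma prob_GG: "prob_space GG"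
  unfolding GG_def by (rule prob_space.prob_space_distr) (auto simp: prob_space_measure_pmf)

lemma distr_GG: "is_distr GG" unfolding is_distr_def using prob_GG by simp

lemma nn_GG:
  assumes h: "h \<in> borel_measurable borel"
  shows "(\<integral>\<^sup>+ y. h y \<partial>GG) = (\<Sum>n. ennreal (pp n) * h (2^n))"
proof -
  have "(\<integral>\<^sup>+ y. h y \<partial>GG) = (\<integral>\<^sup>+ n. h (2^n) \<partial>measure_pmf (geometric_pmf (1/2)))"
    unfolding GG_def by (rule nn_integral_distr) (use h in auto)
  also have "\<dots> = (\<integral>\<^sup>+ n. ennreal (pmf (geometric_pmf (1/2)) n) * h (2^n) \<partial>count_space UNIV)"
    by (rule nn_integral_measure_pmf)
  also have "\<dots> = (\<Sum>n. ennreal (pp n) * h (2^n))"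
    by (simp add: nn_integral_count_space_nat pp_def)
  finally show ?thesis .
qed

lemma sum_ennreal_pp:
  assumes "\<And>n. 0 \<le> m n" "\<And>n. m n \<le> 1"
  shows "(\<Sum>n. ennreal (pp n) * ennreal (m n)) = ennreal (\<Sum>n. pp n * m n)"
proof -
  have nb: "norm (pp n * m n) \<le> pp n" for n
  proof -
    have "norm (pp n * m n) = pp n * m n" using assms(1)[of n] pp_pos[of n] by simp
    also have "\<dots> \<le> pp n" using assms[of n] pp_pos[of n] by (intro mult_left_le) auto
    finally show ?thesis .
  qed
  have sm: "summable (\<lambda>n. pp n * m n)"
    by (rule summable_comparison_test'[OF pp_summable, of 0]) (use nb in auto)
  have "(\<Sum>n. ennreal (pp n) * ennreal (m n)) = (\<Sum>n. ennreal (pp n * m n))"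
    by (rule suminf_cong) (use assms pp_pos in \<open>simp add: ennreal_mult less_imp_le\<close>)
  also have "\<dots> = ennreal (\<Sum>n. pp n * m n)"
  proof (rule suminf_ennreal2[OF _ sm])
    fix n show "0 \<le> pp n * m n" using assms(1)[of n] pp_pos[of n] by simp
  qed
  finally show ?thesis .
qed

lemma measure_GG:
  assumes A: "A \<in> sets borel"
  shows "measure GG A = (\<Sum>n. pp n * indicator A (2^n))"
proof -
  have "emeasure GG A = (\<integral>\<^sup>+ y. indicator A y \<partial>GG)" using A by simp
  also have "\<dots> = (\<Sum>n. ennreal (pp n) * indicator A (2^n))"
    by (rule nn_GG) (use A in auto)
  also have "\<dots> = (\<Sum>n. ennreal (pp n) * ennreal (indicator A ((2::real)^n)))"
    by (rule suminf_cong) (auto simp: indicator_def)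
  also have "\<dots> = ennreal (\<Sum>n. pp n * indicator A (2^n))"
    by (rule sum_ennreal_pp) (auto simp: indicator_def)
  finally have "emeasure GG A = ennreal (\<Sum>n. pp n * indicator A (2^n))" .
  moreover have "(\<Sum>n. pp n * indicator A ((2::real)^n)) \<ge> 0"
    by (intro suminf_nonneg summable_comparison_test'[OF pp_summable, of 0])
       (auto simp: indicator_def pp_pos less_imp_le)
  ultimately show ?thesis by (simp add: measure_def)
qed

lemma measure_H:
  assumes dF: "is_distr F" and A: "A \<in> sets borel"
  shows "measure (product_distr F GG) A = (\<Sum>n. pp n * measure F {x. x * 2^n \<in> A})"
proof -
  interpret F: real_distribution F using distr_rd[OF dF] .
  interpret G: prob_space GG by (rule prob_GG)
  interpret Q: pair_prob_space F GG by unfold_locales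
  have setsQ: "sets (F \<Otimes>\<^sub>M GG) = sets (borel \<Otimes>\<^sub>M (borel::real measure))"
    by (rule sets_pair_measure_cong) auto
  have mm: "(\<lambda>(x::real, y). x * y) \<in> measurable (F \<Otimes>\<^sub>M GG) borel"
    by (subst measurable_cong_sets[OF setsQ refl]) measurable
  let ?B = "(\<lambda>(x::real, y). x * y) -` A \<inter> space (F \<Otimes>\<^sub>M GG)"
  have B: "?B \<in> sets (F \<Otimes>\<^sub>M GG)" using mm A by (rule measurable_sets)
  have "emeasure (product_distr F GG) A = emeasure (F \<Otimes>\<^sub>M GG) ?B"
    unfolding product_distr_def by (rule emeasure_distr[OF mm A])
  also have "\<dots> = (\<integral>\<^sup>+ y. emeasure F ((\<lambda>x. (x, y)) -` ?B) \<partial>GG)"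
    by (rule Q.emeasure_pair_measure_alt2[OF B])
  also have "\<dots> = (\<Sum>n. ennreal (pp n) * emeasure F ((\<lambda>x. (x, 2^n)) -` ?B))"
  proof (rule nn_GG)
    have "(\<lambda>y. emeasure F ((\<lambda>x. (x, y)) -` ?B)) \<in> borel_measurable GG"
      by (rule Q.measurable_emeasure_Pair2[OF B])
    thus "(\<lambda>y. emeasure F ((\<lambda>x. (x, y)) -` ?B)) \<in> borel_measurable borel"
      by (simp only: measurable_cong_sets[OF sets_GG refl])
  qed
  also have "\<dots> = (\<Sum>n. ennreal (pp n) * ennreal (measure F {x. x * 2^n \<in> A}))"
  proof -
    have "(\<lambda>x. (x, 2^n)) -` ?B = {x. x * 2^n \<in> A}" for n
      by (auto simp: space_pair_measure)
    thus ?thesis by (simp add: F.emeasure_eq_measure)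
  qed
  also have "\<dots> = ennreal (\<Sum>n. pp n * measure F {x. x * 2^n \<in> A})"
    by (rule sum_ennreal_pp) auto
  finally have "emeasure (product_distr F GG) A = ennreal (\<Sum>n. pp n * measure F {x. x * 2^n \<in> A})" .
  moreover have "(\<Sum>n. pp n * measure F {x. x * 2^n \<in> A}) \<ge> 0"
    by (intro suminf_nonneg summable_comparison_test'[OF pp_summable, of 0])
       (auto simp: pp_pos less_imp_le intro!: mult_left_le)
  ultimately show ?thesis by (simp add: measure_def)
qed



lemma term_le_suminf: "summable f \<Longrightarrow> (\<And>n. 0 \<le> f n) \<Longrightarrow> f i \<le> suminf (f::nat\<Rightarrow>real)"
  using sum_le_suminf[of f "{i}"] by simp

lemma pp_summ: "(\<And>n. 0 \<le> f n) \<Longrightarrow> (\<And>n. f n \<le> 1) \<Longrightarrow> summable (\<lambda>n. pp n * f n)"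
proof -
  assume a: "\<And>n. 0 \<le> f n" "\<And>n. f n \<le> 1"
  have nb: "norm (pp n * f n) \<le> pp n" for n
    using a[of n] pp_pos[of n] by (simp add: mult_left_le)
  show ?thesis by (rule summable_comparison_test'[OF pp_summable, of 0]) (use nb in auto)
qed

lemma pp_sum1: "suminf pp = 1" using pp_sums by (rule sums_unique[symmetric])

lemma tail_H:
  assumes dF: "is_distr F"
  shows "tail (product_distr F GG) x = (\<Sum>n. pp n * tail F (x / 2^n))"
proof -
  have "measure (product_distr F GG) {..x} = (\<Sum>n. pp n * measure F {y. y * 2^n \<in> {..x}})"
    by (rule measure_H[OF dF]) simp
  also have "\<dots> = (\<Sum>n. pp n * (1 - tail F (x / 2^n)))"
  proof (rule suminf_cong)
    fix n :: nat
    have "{y. y * 2^n \<in> {..x}} = {..x / 2^n}" by (auto simp: field_simps)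
    thus "pp n * measure F {y. y * 2 ^ n \<in> {..x}} = pp n * (1 - tail F (x / 2 ^ n))"
      by (simp add: tail_def)
  qed
  also have "\<dots> = suminf pp - (\<Sum>n. pp n * tail F (x / 2^n))"
    by (subst suminf_diff[OF pp_summable pp_summ]) (auto simp: algebra_simps tail_nonneg[OF dF] tail_le1[OF dF])
  finally show ?thesis by (simp add: tail_def pp_sum1)
qed

lemma H_nonneg:
  assumes dF: "distr_nonneg F"
  shows "distr_nonneg (product_distr F GG)"
proof -
  have d: "is_distr F" using dF by (simp add: distr_nonneg_def)
  interpret F: real_distribution F using distr_rd[OF d] .
  interpret G: prob_space GG by (rule prob_GG)
  interpret Q: pair_prob_space F GG by unfold_locales
  have setsQ: "sets (F \<Otimes>\<^sub>M GG) = sets (borel \<Otimes>\<^sub>M (borel::real measure))"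
    by (rule sets_pair_measure_cong) auto
  have mm: "(\<lambda>(x::real, y). x * y) \<in> measurable (F \<Otimes>\<^sub>M GG) borel"
    by (subst measurable_cong_sets[OF setsQ refl]) measurable
  have ps: "prob_space (product_distr F GG)" unfolding product_distr_def
    by (rule Q.prob_space_distr[OF mm])
  have isd: "is_distr (product_distr F GG)" unfolding is_distr_def using ps
    by (simp add: product_distr_def)
  have "measure (product_distr F GG) {..<0} = (\<Sum>n. pp n * measure F {y. y * 2^n \<in> {..<0}})"
    by (rule measure_H[OF d]) simp
  also have "\<dots> = (\<Sum>n. 0)"
  proof (rule suminf_cong)
    fix n :: nat
    have "{y::real. y * 2^n \<in> {..<0}} = {..<0}" by (auto simp: mult_less_0_iff)
    thus "pp n * measure F {y. y * 2 ^ n \<in> {..<0}} = 0" using dF by (simp add: distr_nonneg_def)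
  qed
  finally show ?thesis using isd by (simp add: distr_nonneg_def)
qed

lemma tail_GG: "tail GG x = (\<Sum>n. pp n * indicator {x<..} ((2::real)^n))"
  using tail_alt[OF distr_GG] measure_GG[of "{x<..}"] by simp

lemma GG_atom: "measure GG {1} = 1/2"
proof -
  have "measure GG {1} = (\<Sum>n. pp n * indicator {1} ((2::real)^n))" by (rule measure_GG) simp
  also have "(\<lambda>n. pp n * indicator {1} ((2::real)^n)) = (\<lambda>n. if n = 0 then pp n else 0)"
  proof (rule ext)
    fix n :: nat
    have "n \<noteq> 0 \<Longrightarrow> 1 < (2::real)^n" by (rule one_less_power) auto
    hence "(2::real)^n = 1 \<longleftrightarrow> n = 0" by (metis less_irrefl power_0)
    thus "pp n * indicator {1} ((2::real)^n) = (if n = 0 then pp n else 0)" by (auto simp: indicator_def)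
  qed
  also have "suminf \<dots> = pp 0" using sums_single[of 0 pp] by (rule sums_unique[symmetric])
  finally show ?thesis by (simp add: pp_def)
qed

lemma GG_tail_pos: "tail GG x > 0"
proof -
  obtain N :: nat where N: "x < 2^N" using real_arch_pow[of 2 x] by auto
  have "0 < pp N * indicator {x<..} ((2::real)^N)" using N pp_pos[of N] by simp
  also have "\<dots> \<le> (\<Sum>n. pp n * indicator {x<..} ((2::real)^n))"
    by (rule term_le_suminf) (auto intro!: pp_summ simp: pp_pos less_imp_le)
  finally show ?thesis by (simp add: tail_GG)
qed

lemma GG_tail_geq: "(\<Sum>n. pp n * (if k \<le> n then 1 else 0)) = (1/2)^k"
proof -
  let ?f = "\<lambda>n. pp n * (if k \<le> n then 1 else 0)"
  have "(\<lambda>i. ?f (i + k)) = (\<lambda>i. (1/2)^k * pp i)" by (rule ext) (simp add: pp_def power_add)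
  moreover have "(\<lambda>i. (1/2::real)^k * pp i) sums ((1/2)^k * 1)" by (intro sums_mult pp_sums)
  ultimately have "(\<lambda>i. ?f (i + k)) sums (1/2)^k" by simp
  hence "?f sums ((1/2)^k + (\<Sum>i<k. ?f i))" by (rule iffD1[OF sums_iff_shift])
  moreover have "(\<Sum>i<k. ?f i) = 0" by simp
  ultimately show ?thesis by (simp add: sums_iff)
qed

lemma GG_tail_a: "tail GG (2^k - 1) = (1/2)^k"
proof -
  have "\<And>n. indicator {2^k - 1<..} ((2::real)^n) = (if k \<le> n then 1 else 0 :: real)"
  proof -
    fix n
    have iff: "(2::real)^k - 1 < 2^n \<longleftrightarrow> k \<le> n"
    proof
      assume h: "(2::real)^k - 1 < 2^n"
      show "k \<le> n"
      proof (rule ccontr)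
        assume "\<not> k \<le> n"
        hence "(2::nat)^n < 2^k" by (intro power_strict_increasing) auto
        hence "(2::nat)^n \<le> 2^k - 1" by linarith
        hence "real ((2::nat)^n) \<le> real (2^k - 1)" by (rule of_nat_mono)
        hence "(2::real)^n \<le> 2^k - 1" by (simp add: of_nat_diff)
        with h show False by simp
      qed
    next
      assume "k \<le> n" hence "(2::real)^k \<le> 2^n" by (intro power_increasing) auto
      thus "(2::real)^k - 1 < 2^n" by linarith
    qed
    show "indicator {2^k - 1<..} ((2::real)^n) = (if k \<le> n then 1 else 0 :: real)"
      by (simp only: indicator_def greaterThan_iff iff of_bool_def)
  qed
  thus ?thesis by (simp add: tail_GG GG_tail_geq)
qed

lemma GG_tail_b: "tail GG (2^k) = (1/2)^(Suc k)"
proof -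
  have "\<And>n. indicator {2^k<..} ((2::real)^n) = (if Suc k \<le> n then 1 else 0 :: real)"
    by (simp add: Suc_le_eq)
  thus ?thesis by (simp only: tail_GG GG_tail_geq)
qed



definition TT :: "real measure \<Rightarrow> real \<Rightarrow> real" where
  "TT F x = (\<Sum>n. pp n * tail F (x / 2^n))"

lemma TT_summ: "is_distr F \<Longrightarrow> summable (\<lambda>n. pp n * tail F (x / 2^n))"
  by (rule pp_summ) (auto simp: tail_nonneg tail_le1)

lemma TT_mono: assumes d: "is_distr F" and "x \<le> y" shows "TT F y \<le> TT F x"
  unfolding TT_def
  by (rule suminf_le[OF _ TT_summ[OF d] TT_summ[OF d]])
     (use assms pp_pos in \<open>auto intro!: mult_left_mono tail_mono divide_right_mono simp: less_imp_le\<close>)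

lemma TT_term: assumes d: "is_distr F" shows "pp m * tail F (x / 2^m) \<le> TT F x"
  unfolding TT_def
  by (rule term_le_suminf[OF TT_summ[OF d]]) (use pp_pos tail_nonneg[OF d] in \<open>auto intro: mult_nonneg_nonneg less_imp_le\<close>)

lemma TT_lower:
  assumes d: "is_distr F" and x: "x \<ge> 1"
  shows "tail F 1 / (4 * x) \<le> TT F x"
proof -
  have ex: "\<exists>m::nat. x \<le> 2^m" using real_arch_pow[of 2 x] by (auto intro: less_imp_le)
  define m where "m = (LEAST m::nat. x \<le> 2^m)"
  have m1: "x \<le> 2^m" unfolding m_def by (rule LeastI_ex[OF ex])
  have m2: "2^m < 2 * x"
  proof (cases m)
    case 0 thus ?thesis using x by simp
  next
    case (Suc j)
    have "\<not> x \<le> 2^j" using not_less_Least[of j "\<lambda>m. x \<le> 2^m"] Suc unfolding m_def by auto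
    thus ?thesis using Suc by simp
  qed
  have "tail F 1 / (4 * x) \<le> pp m * tail F 1"
  proof -
    have "pp m = 1 / (2 * 2^m)" by (simp add: pp_def power_divide)
    also have "\<dots> \<ge> 1 / (4 * x)" using m2 x by (intro divide_left_mono) auto
    finally show ?thesis using tail_nonneg[OF d, of 1] x
      by (metis mult.commute divide_inverse mult_left_mono inverse_eq_divide)
  qed
  also have "\<dots> \<le> pp m * tail F (x / 2^m)"
    using m1 pp_pos[of m] by (intro mult_left_mono tail_mono[OF d]) (auto simp: field_simps less_imp_le)
  also have "\<dots> \<le> TT F x" by (rule TT_term[OF d])
  finally show ?thesis .
qed

lemma uc_tail:
  assumes d: "is_distr F" and c: "continuous_distr F"
  shows "uniformly_continuous_on {a..b} (tail F)"
proof -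
  interpret real_distribution F using distr_rd[OF d] .
  have "continuous_on {a..b} (tail F)"
  proof (intro continuous_at_imp_continuous_on ballI)
    fix x
    have "isCont (cdf F) x" using c unfolding continuous_distr_def by (simp add: isCont_cdf)
    hence "isCont (\<lambda>x. 1 - cdf F x) x" by (intro continuous_intros)
    moreover have "(\<lambda>x. 1 - cdf F x) = tail F" by (rule ext) (simp add: tail_def cdf_def)
    ultimately show "isCont (tail F) x" by simp
  qed
  thus ?thesis by (intro compact_uniformly_continuous) auto
qed



lemma TT_L1:
  assumes d: "is_distr F" and c: "continuous_distr F" and pos: "\<And>x. tail F x > 0"
  and hyp: "\<And>\<epsilon>. \<epsilon> > 0 \<Longrightarrow> \<exists>k y0. (\<forall>y\<ge>y0. tail F (y - (1/2)^k) \<le> (1 + \<epsilon>) * tail F y) \<and>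
              (k = 0 \<or> ((\<lambda>x. x * tail F ((x - 1) / 2^k)) \<longlongrightarrow> 0) at_top)"
  shows "((\<lambda>x. TT F (x - 1) / TT F x) \<longlongrightarrow> 1) at_top"
proof (rule tendstoI)
  fix e :: real assume e: "e > 0"
  define \<epsilon> where "\<epsilon> = e / 3"
  have \<epsilon>: "\<epsilon> > 0" using e by (simp add: \<epsilon>_def)
  obtain k y0' where L: "\<forall>y\<ge>y0'. tail F (y - (1/2)^k) \<le> (1 + \<epsilon>) * tail F y"
    and K: "k = 0 \<or> ((\<lambda>x. x * tail F ((x - 1) / 2^k)) \<longlongrightarrow> 0) at_top"
    using hyp[OF \<epsilon>] by blast
  define y0 where "y0 = max y0' 1"
  have y01: "y0 \<ge> 1" and y0L: "\<And>y. y \<ge> y0 \<Longrightarrow> tail F (y - (1/2)^k) \<le> (1 + \<epsilon>) * tail F y"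
    using L by (auto simp: y0_def)
  define Fb where "Fb = tail F"
  have Fbpos: "\<And>x. Fb x > 0" using pos by (simp add: Fb_def)
  have Fbmono: "\<And>x y. x \<le> y \<Longrightarrow> Fb y \<le> Fb x" unfolding Fb_def by (rule tail_mono[OF d])
  have "uniformly_continuous_on {-1..y0} Fb" unfolding Fb_def by (rule uc_tail[OF d c])
  moreover have eta: "\<epsilon> * Fb y0 > 0" using \<epsilon> Fbpos by simp
  ultimately obtain \<delta> where \<delta>: "\<delta> > 0"
    and uc: "\<And>u v. u \<in> {-1..y0} \<Longrightarrow> v \<in> {-1..y0} \<Longrightarrow> dist u v < \<delta> \<Longrightarrow> dist (Fb u) (Fb v) < \<epsilon> * Fb y0"
    unfolding uniformly_continuous_on_def by metis
  define r where "r x = (if k = 0 then 0 else Fb ((x - 1) / 2^k))" for x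
  have ev1: "\<forall>\<^sub>F x in at_top. x \<ge> 1 \<and> x > y0 / \<delta>"
    using eventually_ge_at_top[of "1::real"] eventually_gt_at_top[of "y0 / \<delta>"] by eventually_elim auto
  have ev2: "\<forall>\<^sub>F x in at_top. x * r x < \<epsilon> * Fb 1 / 4"
  proof (cases "k = 0")
    case True thus ?thesis using \<epsilon> Fbpos[of 1] by (simp add: r_def)
  next
    case False
    hence "((\<lambda>x. x * Fb ((x - 1) / 2^k)) \<longlongrightarrow> 0) at_top" using K by (simp add: Fb_def)
    moreover have "\<epsilon> * Fb 1 / 4 > 0" using \<epsilon> Fbpos[of 1] by simp
    ultimately have "\<forall>\<^sub>F x in at_top. x * Fb ((x - 1) / 2^k) < \<epsilon> * Fb 1 / 4"
      by (rule order_tendstoD)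
    thus ?thesis using False by (simp add: r_def)
  qed
  show "\<forall>\<^sub>F x in at_top. dist (TT F (x - 1) / TT F x) 1 < e"
    using ev1 ev2
  proof eventually_elim
    case (elim x)
    hence x1: "x \<ge> 1" and xd: "x > y0 / \<delta>" and xr: "x * r x < \<epsilon> * Fb 1 / 4" by auto
    have r0: "r x \<ge> 0" unfolding r_def using Fbpos by (auto intro: less_imp_le)
    have tm: "Fb ((x - 1) / 2^n) - Fb (x / 2^n) \<le> \<epsilon> * Fb (x / 2^n) + r x" for n :: nat
    proof -
      have p2: "(2::real)^n > 0" by simp
      have zn: "(x - 1) / 2^n = x / 2^n - (1/2)^n" by (simp add: field_simps power_divide)
      show ?thesis
      proof (cases "x / 2^n < y0")
        case True
        have "x < y0 * 2^n" using True p2 by (simp add: field_simps)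
        hence "(1/2)^n < \<delta>"
        proof -
          have "y0 / x < \<delta>" using xd x1 \<delta> by (simp add: field_simps)
          moreover have "(1/2::real)^n < y0 / x" using \<open>x < y0 * 2^n\<close> x1 by (simp add: field_simps power_divide)
          ultimately show ?thesis by linarith
        qed
        have a1: "(x - 1) / 2^n \<ge> 0" using x1 by simp
        have a2: "(x - 1) / 2^n \<le> x / 2^n" by (rule divide_right_mono) auto
        have in1: "(x - 1) / 2^n \<in> {-1..y0}" using a1 a2 True by auto
        have in2: "x / 2^n \<in> {-1..y0}" using a1 a2 True by auto
        have "dist ((x - 1) / 2^n) (x / 2^n) < \<delta>" using zn \<open>(1/2)^n < \<delta>\<close> by (simp add: dist_real_def)
        hence "dist (Fb ((x - 1) / 2^n)) (Fb (x / 2^n)) < \<epsilon> * Fb y0" using uc in1 in2 by blast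
        moreover have "\<epsilon> * Fb y0 \<le> \<epsilon> * Fb (x / 2^n)" using True \<epsilon> Fbmono by (intro mult_left_mono) auto
        ultimately show ?thesis using r0 by (simp add: dist_real_def)
      next
        case False
        show ?thesis
        proof (cases "k \<le> n")
          case True
          have "(1/2::real)^n \<le> (1/2)^k" using True by (intro power_decreasing) auto
          hence "Fb ((x - 1) / 2^n) \<le> Fb (x / 2^n - (1/2)^k)" using zn by (intro Fbmono) auto
          also have "\<dots> \<le> (1 + \<epsilon>) * Fb (x / 2^n)" using y0L[of "x / 2^n"] False by (simp add: Fb_def)
          finally show ?thesis using r0 by (simp add: algebra_simps)
        next
          case nk: False
          hence k0: "k \<noteq> 0" by auto
          have "(2::real)^n \<le> 2^k" using nk by (intro power_increasing) auto
          hence "(x - 1) / 2^k \<le> (x - 1) / 2^n" using x1 by (intro divide_left_mono) auto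
          hence "Fb ((x - 1) / 2^n) \<le> r x" using k0 Fbmono by (simp add: r_def)
          moreover have "0 \<le> \<epsilon> * Fb (x / 2^n)" using \<epsilon> Fbpos by (simp add: less_imp_le)
          moreover have "0 \<le> Fb (x / 2^n)" using Fbpos by (simp add: less_imp_le)
          ultimately show ?thesis by linarith
        qed
      qed
    qed
    have s1: "summable (\<lambda>n. pp n * Fb ((x - 1) / 2^n))" unfolding Fb_def by (rule TT_summ[OF d])
    have s2: "summable (\<lambda>n. pp n * Fb (x / 2^n))" unfolding Fb_def by (rule TT_summ[OF d])
    have "TT F (x - 1) - TT F x = (\<Sum>n. pp n * Fb ((x - 1) / 2^n) - pp n * Fb (x / 2^n))"
      unfolding TT_def Fb_def[symmetric] using s1 s2 by (rule suminf_diff)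
    also have "\<dots> \<le> (\<Sum>n. \<epsilon> * (pp n * Fb (x / 2^n)) + r x * pp n)"
    proof (rule suminf_le)
      fix n
      have "pp n * (Fb ((x - 1) / 2^n) - Fb (x / 2^n)) \<le> pp n * (\<epsilon> * Fb (x / 2^n) + r x)"
        using tm[of n] pp_pos[of n] by (intro mult_left_mono) auto
      thus "pp n * Fb ((x - 1) / 2^n) - pp n * Fb (x / 2^n) \<le> \<epsilon> * (pp n * Fb (x / 2^n)) + r x * pp n"
        by (simp add: algebra_simps)
      show "summable (\<lambda>n. pp n * Fb ((x - 1) / 2^n) - pp n * Fb (x / 2^n))"
        using s1 s2 by (rule summable_diff)
      show "summable (\<lambda>n. \<epsilon> * (pp n * Fb (x / 2^n)) + r x * pp n)"
        using s2 pp_summable by (intro summable_add summable_mult summable_mult2)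
    qed
    also have "\<dots> = \<epsilon> * TT F x + r x"
    proof -
      have "(\<Sum>n. \<epsilon> * (pp n * Fb (x / 2^n)) + r x * pp n) = (\<Sum>n. \<epsilon> * (pp n * Fb (x / 2^n))) + (\<Sum>n. r x * pp n)"
        using s2 pp_summable by (intro suminf_add[symmetric] summable_mult)
      also have "\<dots> = \<epsilon> * TT F x + r x * suminf pp"
        using s2 pp_summable by (simp add: suminf_mult TT_def Fb_def)
      finally show ?thesis by (simp add: pp_sum1)
    qed
    finally have diff: "TT F (x - 1) - TT F x \<le> \<epsilon> * TT F x + r x" .
    have low: "Fb 1 / (4 * x) \<le> TT F x" unfolding Fb_def by (rule TT_lower[OF d x1])
    have Tpos: "TT F x > 0" using low Fbpos[of 1] x1 by (smt (verit) divide_pos_pos)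
    have "r x < \<epsilon> * Fb 1 / (4 * x)" using xr x1 by (simp add: field_simps)
    also have "\<dots> = \<epsilon> * (Fb 1 / (4 * x))" by simp
    also have "\<dots> \<le> \<epsilon> * TT F x" using low \<epsilon> by (intro mult_left_mono) auto
    finally have "TT F (x - 1) \<le> (1 + 2 * \<epsilon>) * TT F x" using diff by (simp add: algebra_simps)
    hence up: "TT F (x - 1) / TT F x \<le> 1 + 2 * \<epsilon>" using Tpos by (simp add: field_simps)
    have "TT F x \<le> TT F (x - 1)" by (rule TT_mono[OF d]) simp
    hence lo: "1 \<le> TT F (x - 1) / TT F x" using Tpos by (simp add: field_simps)
    show ?case using up lo e by (simp add: dist_real_def \<epsilon>_def abs_if)
  qed
qed



lemma not_lattice:
  assumes d: "is_distr F" and c: "continuous_distr F"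
  shows "\<not> lattice_distr F"
proof
  assume "lattice_distr F"
  then obtain h where h: "lattice_with F h" unfolding lattice_distr_def by blast
  interpret real_distribution F using distr_rd[OF d] .
  have eq: "{x. \<exists>k::int. x = of_int k * h} = (\<Union>k\<in>(UNIV::int set). {of_int k * h})" by auto
  have "(\<Union>k\<in>(UNIV::int set). {of_int k * h}) \<in> null_sets F"
  proof (rule null_sets_UN')
    fix k :: int
    have "emeasure F {of_int k * h} = 0" using c unfolding continuous_distr_def
      by (simp add: emeasure_eq_measure)
    thus "{of_int k * h} \<in> null_sets F" by (auto simp: null_sets_def)
  qed simp
  hence "measure F {x. \<exists>k::int. x = of_int k * h} = 0" unfolding eq by (simp add: measure_def null_sets_def)
  with h show False unfolding lattice_with_def by simp
qed

lemma class_L_shift: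
  assumes d: "is_distr F" and c: "continuous_distr F" and L: "class_L \<gamma> F"
  shows "\<And>x. tail F x > 0" "\<And>t. ((\<lambda>x. tail F (x - t) / tail F x) \<longlongrightarrow> exp (\<gamma> * t)) at_top"
proof -
  show pos: "\<And>x. tail F x > 0" using L unfolding class_L_def by auto
  fix t :: real
  have "(\<lambda>x. tail F (x - t)) \<sim>[at_top] (\<lambda>x. exp (\<gamma> * t) * tail F x)"
    using L not_lattice[OF d c] unfolding class_L_def by auto
  from asymp_equivD[OF this]
  have "((\<lambda>x. tail F (x - t) / (exp (\<gamma> * t) * tail F x)) \<longlongrightarrow> 1) at_top"
    using pos by (simp add: less_imp_neq[symmetric])
  hence "((\<lambda>x. exp (\<gamma> * t) * (tail F (x - t) / (exp (\<gamma> * t) * tail F x))) \<longlongrightarrow> exp (\<gamma> * t) * 1) at_top"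
    by (intro tendsto_mult tendsto_const)
  thus "((\<lambda>x. tail F (x - t) / tail F x) \<longlongrightarrow> exp (\<gamma> * t)) at_top" by simp
qed

lemma decay:
  fixes Fb :: "real \<Rightarrow> real"
  assumes pos: "\<And>x. Fb x > 0" and le1: "\<And>x. Fb x \<le> 1" and g: "\<gamma> > 0"
  and lim: "((\<lambda>x. Fb (x - 1) / Fb x) \<longlongrightarrow> exp \<gamma>) at_top"
  shows "((\<lambda>y. y * Fb y) \<longlongrightarrow> 0) at_top"
proof -
  define q where "q = exp (\<gamma> / 2)"
  have q1: "q > 1" using g by (simp add: q_def)
  have "q < exp \<gamma>" using g by (simp add: q_def)
  with lim have "\<forall>\<^sub>F x in at_top. Fb (x - 1) / Fb x > q" by (rule order_tendstoD)
  then obtain y1 where y1: "\<And>x. x \<ge> y1 \<Longrightarrow> Fb (x - 1) / Fb x > q"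
    unfolding eventually_at_top_linorder by blast
  have step: "Fb y \<le> Fb (y - 1) / q" if "y \<ge> y1" for y
  proof -
    have "Fb (y - 1) / Fb y > q" using y1[OF that] .
    thus ?thesis using pos[of y] q1 by (simp add: field_simps)
  qed
  have ind: "\<forall>y. y \<ge> y1 + real j \<longrightarrow> Fb y \<le> (1/q)^j" for j :: nat
  proof (induction j)
    case 0 show ?case using le1 by simp
  next
    case (Suc j)
    show ?case
    proof (intro allI impI)
      fix y assume y: "y \<ge> y1 + real (Suc j)"
      have "Fb y \<le> Fb (y - 1) / q" by (rule step) (use y in auto)
      also have "\<dots> \<le> (1/q)^j / q" using Suc y q1 by (intro divide_right_mono) auto
      finally show "Fb y \<le> (1/q)^(Suc j)" by (simp add: field_simps)
    qed
  qed
  have bound: "y * Fb y \<le> y * exp (- (\<gamma>/2) * (y - (y1 + 1)))" if y: "y \<ge> y1 + 1" and y0: "y \<ge> 0" for y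
  proof -
    define j where "j = nat \<lfloor>y - y1\<rfloor>"
    have j1: "real j \<le> y - y1" using y by (simp add: j_def)
    have j2: "real j \<ge> y - (y1 + 1)" using y unfolding j_def by linarith
    have "Fb y \<le> (1/q)^j" using ind[of j] j1 by auto
    also have "(1/q)^j = exp (- (\<gamma>/2) * real j)" by (simp add: q_def exp_of_nat_mult[symmetric] exp_minus field_simps)
    also have "\<dots> \<le> exp (- (\<gamma>/2) * (y - (y1 + 1)))" using j2 g by simp
    finally show ?thesis using y0 by (intro mult_left_mono) auto
  qed
  have lim0: "((\<lambda>y. y * exp (- (\<gamma>/2) * (y - (y1 + 1)))) \<longlongrightarrow> 0) at_top"
    using g by real_asymp
  show ?thesis
  proof (rule tendsto_sandwich[OF _ _ tendsto_const lim0])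
    show "\<forall>\<^sub>F y in at_top. 0 \<le> y * Fb y"
      using eventually_ge_at_top[of 0] by eventually_elim (use pos in \<open>simp add: less_imp_le\<close>)
    show "\<forall>\<^sub>F y in at_top. y * Fb y \<le> y * exp (- (\<gamma>/2) * (y - (y1 + 1)))"
      using eventually_ge_at_top[of "y1 + 1"] eventually_ge_at_top[of 0] by eventually_elim (rule bound)
  qed
qed



lemma TT_D: assumes d: "is_distr F" shows "TT F (x/2) \<le> 2 * TT F x"
proof -
  let ?f = "\<lambda>n. pp n * tail F (x / 2^n)"
  have s: "summable ?f" by (rule TT_summ[OF d])
  have "TT F (x/2) = (\<Sum>n. 2 * ?f (Suc n))"
    unfolding TT_def by (rule suminf_cong) (simp add: pp_def field_simps)
  also have "\<dots> = 2 * (\<Sum>n. ?f (Suc n))"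
    by (rule suminf_mult) (rule iffD2[OF summable_Suc_iff s])
  also have "(\<Sum>n. ?f (Suc n)) = TT F x - ?f 0" unfolding TT_def using s by (rule suminf_split_head)
  also have "?f 0 \<ge> 0" using pp_pos[of 0] tail_nonneg[OF d] by simp
  hence "2 * (TT F x - ?f 0) \<le> 2 * TT F x" by simp
  finally show ?thesis .
qed

lemma TT_pos: assumes d: "is_distr F" and pos: "\<And>x. tail F x > 0" shows "TT F x > 0"
  using TT_term[OF d, of 0 x] pp_pos[of 0] pos[of x] by (smt (verit) mult_pos_pos power_0 div_by_1)

lemma tail_H_TT: "is_distr F \<Longrightarrow> tail (product_distr F GG) = TT F"
  by (rule ext) (simp add: tail_H TT_def)

lemma main_H:
  assumes dF: "distr_nonneg F" and c: "continuous_distr F" and pos: "\<And>x. tail F x > 0"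
  and hyp: "\<And>\<epsilon>. \<epsilon> > 0 \<Longrightarrow> \<exists>k y0. (\<forall>y\<ge>y0. tail F (y - (1/2)^k) \<le> (1 + \<epsilon>) * tail F y) \<and>
              (k = 0 \<or> ((\<lambda>x. x * tail F ((x - 1) / 2^k)) \<longlongrightarrow> 0) at_top)"
  shows "subexponential (product_distr F GG)"
proof -
  have d: "is_distr F" using dF by (simp add: distr_nonneg_def)
  note tH = tail_H_TT[OF d]
  show ?thesis
  proof (rule goldie[where C=2])
    show "distr_nonneg (product_distr F GG)" by (rule H_nonneg[OF dF])
    show "\<And>x. tail (product_distr F GG) x > 0" unfolding tH by (rule TT_pos[OF d pos])
    show "\<And>x. tail (product_distr F GG) (x/2) \<le> 2 * tail (product_distr F GG) x"
      unfolding tH by (rule TT_D[OF d])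
    fix a :: real assume a: "a \<ge> 0"
    show "((\<lambda>x. tail (product_distr F GG) (x - a) / tail (product_distr F GG) x) \<longlongrightarrow> 1) at_top"
      unfolding tH
      by (rule ratio_shift[OF TT_pos[OF d pos] TT_mono[OF d] TT_L1[OF d c pos hyp] a]) auto
  qed simp
qed

lemma hyp_L0:
  assumes lim: "((\<lambda>x. tail F (x - 1) / tail F x) \<longlongrightarrow> 1) at_top"
  and pos: "\<And>x. tail F x > 0"
  and \<epsilon>: "\<epsilon> > 0"
  shows "\<exists>k y0. (\<forall>y\<ge>y0. tail F (y - (1/2)^k) \<le> (1 + \<epsilon>) * tail F y) \<and>
              (k = 0 \<or> ((\<lambda>x. x * tail F ((x - 1) / 2^k)) \<longlongrightarrow> 0) at_top)"
proof -
  have "1 < 1 + \<epsilon>" using \<epsilon> by simp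
  with lim have "\<forall>\<^sub>F x in at_top. tail F (x - 1) / tail F x < 1 + \<epsilon>" by (rule order_tendstoD)
  then obtain y0 where y0: "\<And>y. y \<ge> y0 \<Longrightarrow> tail F (y - 1) / tail F y < 1 + \<epsilon>"
    unfolding eventually_at_top_linorder by blast
  have "\<forall>y\<ge>y0. tail F (y - (1/2)^0) \<le> (1 + \<epsilon>) * tail F y"
  proof (intro allI impI)
    fix y assume "y \<ge> y0"
    from y0[OF this] pos[of y] show "tail F (y - (1/2)^0) \<le> (1 + \<epsilon>) * tail F y"
      by (simp add: field_simps)
  qed
  thus ?thesis by blast
qed

lemma hyp_Lg:
  assumes lim: "\<And>t. ((\<lambda>x. tail F (x - t) / tail F x) \<longlongrightarrow> exp (\<gamma> * t)) at_top"
  and pos: "\<And>x. tail F x > 0" and g: "\<gamma> > 0"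
  and dec: "((\<lambda>y. y * tail F y) \<longlongrightarrow> 0) at_top"
  and \<epsilon>: "\<epsilon> > 0"
  shows "\<exists>k y0. (\<forall>y\<ge>y0. tail F (y - (1/2)^k) \<le> (1 + \<epsilon>) * tail F y) \<and>
              (k = 0 \<or> ((\<lambda>x. x * tail F ((x - 1) / 2^k)) \<longlongrightarrow> 0) at_top)"
proof -
  have "(\<lambda>k. exp (\<gamma> * (1/2)^k)) \<longlonglongrightarrow> exp (\<gamma> * 0)"
    by (intro tendsto_intros LIMSEQ_power_zero) simp
  hence "\<forall>\<^sub>F k in sequentially. exp (\<gamma> * (1/2)^k) < 1 + \<epsilon>"
    using \<epsilon> by (intro order_tendstoD) auto
  then obtain k where k: "exp (\<gamma> * (1/2)^k) < 1 + \<epsilon>" unfolding eventually_sequentially by blast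
  with lim[of "(1/2)^k"] have "\<forall>\<^sub>F x in at_top. tail F (x - (1/2)^k) / tail F x < 1 + \<epsilon>"
    by (rule order_tendstoD)
  then obtain y0 where y0: "\<And>y. y \<ge> y0 \<Longrightarrow> tail F (y - (1/2)^k) / tail F y < 1 + \<epsilon>"
    unfolding eventually_at_top_linorder by blast
  have A: "\<forall>y\<ge>y0. tail F (y - (1/2)^k) \<le> (1 + \<epsilon>) * tail F y"
  proof (intro allI impI)
    fix y assume "y \<ge> y0"
    from y0[OF this] pos[of y] show "tail F (y - (1/2)^k) \<le> (1 + \<epsilon>) * tail F y"
      by (simp add: field_simps)
  qed
  have fl: "filterlim (\<lambda>x::real. (x - 1) / 2^k) at_top at_top" by real_asymp
  have B1: "((\<lambda>x. ((x - 1) / 2^k) * tail F ((x - 1) / 2^k)) \<longlongrightarrow> 0) at_top"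
    using filterlim_compose[OF dec fl] by simp
  have B2: "((\<lambda>x. tail F ((x - 1) / 2^k)) \<longlongrightarrow> 0) at_top"
  proof -
    have "is_distr F \<Longrightarrow> True" by simp
    have "((\<lambda>y. tail F y) \<longlongrightarrow> 0) at_top"
    proof (rule tendsto_sandwich[OF _ _ tendsto_const dec])
      show "\<forall>\<^sub>F y in at_top. 0 \<le> tail F y" using pos by (simp add: less_imp_le)
      show "\<forall>\<^sub>F y in at_top. tail F y \<le> y * tail F y"
        using eventually_ge_at_top[of 1] by eventually_elim (use pos in \<open>simp add: less_imp_le\<close>)
    qed
    thus ?thesis using filterlim_compose[OF _ fl] by blast
  qed
  have "((\<lambda>x. 2^k * (((x - 1) / 2^k) * tail F ((x - 1) / 2^k)) + tail F ((x - 1) / 2^k)) \<longlongrightarrow> 2^k * 0 + 0) at_top"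
    by (intro tendsto_intros B1 B2)
  moreover have "\<And>x. 2^k * (((x - 1) / 2^k) * tail F ((x - 1) / 2^k)) + tail F ((x - 1) / 2^k) = x * tail F ((x - 1) / 2^k)"
    by (simp add: field_simps)
  ultimately have "((\<lambda>x. x * tail F ((x - 1) / 2^k)) \<longlongrightarrow> 0) at_top" by simp
  with A show ?thesis by blast
qed



lemma noO_g:
  assumes d: "is_distr F" and pos: "\<And>x. tail F x > 0"
  and dec: "((\<lambda>y. y * tail F y) \<longlongrightarrow> 0) at_top" and t: "t \<ge> 1"
  shows "TT F \<notin> O(\<lambda>x. tail F (x / t))"
proof
  assume "TT F \<in> O(\<lambda>x. tail F (x / t))"
  then obtain c where c: "c > 0" and ev: "\<forall>\<^sub>F x in at_top. norm (TT F x) \<le> c * norm (tail F (x / t))"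
    by (elim landau_o.bigE)
  have fl: "filterlim (\<lambda>x. x / t) at_top at_top" using t by real_asymp
  have l1: "((\<lambda>x. (x / t) * tail F (x / t)) \<longlongrightarrow> 0) at_top"
    using filterlim_compose[OF dec fl] by simp
  have "((\<lambda>x. t * ((x / t) * tail F (x / t))) \<longlongrightarrow> t * 0) at_top" by (intro tendsto_intros l1)
  moreover have "\<And>x. t * ((x / t) * tail F (x / t)) = x * tail F (x / t)" using t by simp
  ultimately have l2: "((\<lambda>x. x * tail F (x / t)) \<longlongrightarrow> 0) at_top" by simp
  have "tail F 1 / (4 * c) > 0" using pos[of 1] c by simp
  with l2 have ev2: "\<forall>\<^sub>F x in at_top. x * tail F (x / t) < tail F 1 / (4 * c)"
    by (rule order_tendstoD)
  have "\<forall>\<^sub>F x in at_top. norm (TT F x) \<le> c * norm (tail F (x / t)) \<and>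
      x * tail F (x / t) < tail F 1 / (4 * c) \<and> 1 \<le> x"
    using ev ev2 eventually_ge_at_top[of 1] by eventually_elim auto
  then obtain x where elim: "norm (TT F x) \<le> c * norm (tail F (x / t))"
      "x * tail F (x / t) < tail F 1 / (4 * c)" "1 \<le> x"
    unfolding eventually_at_top_linorder by (meson order_refl)
  have low: "tail F 1 / (4 * x) \<le> TT F x" by (rule TT_lower[OF d]) (use elim in auto)
  have "TT F x \<le> c * tail F (x / t)" using elim TT_pos[OF d pos, of x] pos[of "x/t"] by simp
  with low have "tail F 1 / (4 * x) \<le> c * tail F (x / t)" by linarith
  hence "tail F 1 / (4 * c) \<le> x * tail F (x / t)" using elim c by (simp add: field_simps)
  with elim show False by linarith
qed

lemma noO_0:
  assumes dF: "distr_nonneg F" and pos: "\<And>x. tail F x > 0"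
  and lim1: "((\<lambda>x. tail F (x - 1) / tail F x) \<longlongrightarrow> 1) at_top"
  and nS: "\<not> subexponential F" and t: "t \<ge> 1"
  shows "TT F \<notin> O(\<lambda>x. tail F (x / t))"
proof
  have d: "is_distr F" using dF by (simp add: distr_nonneg_def)
  assume "TT F \<in> O(\<lambda>x. tail F (x / t))"
  then obtain c where c: "c > 0" and ev: "\<forall>\<^sub>F x in at_top. norm (TT F x) \<le> c * norm (tail F (x / t))"
    by (elim landau_o.bigE)
  obtain n :: nat where n: "2 * t < 2^n" using real_arch_pow[of 2 "2*t"] by auto
  define K where "K = c / pp n"
  have K: "K > 0" using c pp_pos[of n] by (simp add: K_def)
  have ev1: "\<forall>\<^sub>F x in at_top. tail F (x / (2 * t)) \<le> K * tail F (x / t)"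
    using ev eventually_ge_at_top[of 0]
  proof eventually_elim
    case (elim x)
    have "x / 2^n \<le> x / (2 * t)" using elim n t by (intro divide_left_mono) auto
    hence "pp n * tail F (x / (2 * t)) \<le> pp n * tail F (x / 2^n)"
      using pp_pos[of n] by (intro mult_left_mono tail_mono[OF d]) (auto simp: less_imp_le)
    also have "\<dots> \<le> TT F x" by (rule TT_term[OF d])
    also have "\<dots> \<le> c * tail F (x / t)" using elim TT_pos[OF d pos, of x] pos[of "x/t"] by simp
    finally show ?case using pp_pos[of n] by (simp add: K_def field_simps)
  qed
  have fl: "filterlim (\<lambda>y. t * y) at_top at_top" using t by real_asymp
  have "\<forall>\<^sub>F y in at_top. tail F ((t * y) / (2 * t)) \<le> K * tail F ((t * y) / t)"
    using ev1 fl unfolding filterlim_iff by blast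
  moreover have "\<And>y. (t * y) / (2 * t) = y / 2" "\<And>y. (t * y) / t = y" using t by auto
  ultimately have "\<forall>\<^sub>F y in at_top. tail F (y / 2) \<le> K * tail F y" by simp
  then obtain Y where Y: "\<And>y. y \<ge> Y \<Longrightarrow> tail F (y / 2) \<le> K * tail F y"
    unfolding eventually_at_top_linorder by blast
  define C where "C = max K (1 / tail F Y)"
  have C0: "C \<ge> 0" using K by (simp add: C_def)
  have D: "tail F (y / 2) \<le> C * tail F y" for y
  proof (cases "y \<ge> Y")
    case True
    have "K * tail F y \<le> C * tail F y" using pos[of y] by (intro mult_right_mono) (auto simp: C_def)
    thus ?thesis using Y[OF True] by linarith
  next
    case False
    have "tail F (y / 2) \<le> 1" by (rule tail_le1[OF d])
    also have "1 = (1 / tail F Y) * tail F Y" using pos[of Y] by simp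
    also have "\<dots> \<le> (1 / tail F Y) * tail F y"
      using False pos[of Y] by (intro mult_left_mono tail_mono[OF d]) auto
    also have "\<dots> \<le> C * tail F y" using pos[of y] by (intro mult_right_mono) (auto simp: C_def)
    finally show ?thesis .
  qed
  have "subexponential F"
  proof (rule goldie[OF dF pos _ C0 D])
    fix a :: real assume a: "a \<ge> 0"
    have mono: "\<And>x y. x \<le> y \<Longrightarrow> tail F y \<le> tail F x" by (rule tail_mono[OF d])
    show "((\<lambda>x. tail F (x - a) / tail F x) \<longlongrightarrow> 1) at_top"
      by (rule ratio_shift[where T="tail F", OF pos mono lim1 a])
  qed
  with nS show False by simp
qed

lemma L0_ratio:
  assumes L: "class_L 0 V"
  shows "((\<lambda>x. tail V (x - 1) / tail V x) \<longlongrightarrow> 1) at_top"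
proof -
  have pos: "\<And>x. tail V x > 0" using L unfolding class_L_def by auto
  have "(\<lambda>x. tail V (x - 1)) \<sim>[at_top] (\<lambda>x. exp (0 * 1) * tail V x)"
    using L unfolding class_L_def by auto
  from asymp_equivD[OF this]
  show ?thesis using pos by (simp add: less_imp_neq[symmetric])
qed

lemma GG_props: "distr_nonneg GG" "\<not> continuous_distr GG" "\<And>x. tail GG x > 0" "\<not> long_tailed GG"
proof -
  have "measure GG {..<0} = (\<Sum>n. pp n * indicator {..<0} ((2::real)^n))" by (rule measure_GG) simp
  also have "\<dots> = (\<Sum>n. 0)" by (rule suminf_cong) simp
  finally show "distr_nonneg GG" using distr_GG by (simp add: distr_nonneg_def)
  show "\<not> continuous_distr GG" using GG_atom unfolding continuous_distr_def by force
  show "\<And>x. tail GG x > 0" by (rule GG_tail_pos)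
  show "\<not> long_tailed GG"
  proof
    assume "long_tailed GG"
    hence lim: "((\<lambda>x. tail GG (x - 1) / tail GG x) \<longlongrightarrow> 1) at_top" by (rule L0_ratio)
    have fl: "filterlim (\<lambda>k::nat. (2::real)^k) at_top sequentially" by real_asymp
    have "(\<lambda>k. tail GG (2^k - 1) / tail GG (2^k)) \<longlonglongrightarrow> 1"
      using filterlim_compose[OF lim fl] by simp
    moreover have "\<And>k. tail GG (2^k - 1) / tail GG (2^k) = 2"
      by (simp add: GG_tail_a GG_tail_b field_simps)
    ultimately have "(\<lambda>k::nat. 2::real) \<longlonglongrightarrow> 1" by simp
    hence "(2::real) = 1" using LIMSEQ_unique tendsto_const by blast
    thus False by simp
  qed
qed

theorem proposition1p1:
  fixes F :: "real measure"
  assumes "distr_nonneg F"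
    and "continuous_distr F"
    and "(long_tailed F \<and> \<not> subexponential F) \<or> (\<exists>\<gamma>>0. class_L \<gamma> F)"
  shows "\<exists>G. distr_nonneg G \<and> \<not> continuous_distr G \<and> (\<forall>x. tail G x > 0) \<and>
    \<not> long_tailed G \<and> subexponential (product_distr F G) \<and>
    \<not> (\<exists>t\<ge>1. (\<lambda>x. tail (product_distr F G) x) \<in> O(\<lambda>x. tail F (x / t))) \<and>
    \<not> (\<exists>d\<in>disc_points G. (\<lambda>x. tail (product_distr F G) x) \<in> O(\<lambda>x. tail F (x / d)))"
proof -
  note dF = assms(1) and c = assms(2)
  have d: "is_distr F" using dF by (simp add: distr_nonneg_def)
  from assms(3) obtain \<gamma> where gL: "class_L \<gamma> F"
    and cs: "(\<gamma> = 0 \<and> \<not> subexponential F) \<or> \<gamma> > 0" by blast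
  note pos = class_L_shift(1)[OF d c gL]
  note rat = class_L_shift(2)[OF d c gL]
  have tH: "(\<lambda>x. tail (product_distr F GG) x) = TT F" using tail_H_TT[OF d] by simp
  have hyp: "\<exists>k y0. (\<forall>y\<ge>y0. tail F (y - (1/2)^k) \<le> (1 + \<epsilon>) * tail F y) \<and>
              (k = 0 \<or> ((\<lambda>x. x * tail F ((x - 1) / 2^k)) \<longlongrightarrow> 0) at_top)" if \<epsilon>: "\<epsilon> > 0" for \<epsilon>
  proof (cases "\<gamma> > 0")
    case True
    have dec: "((\<lambda>y. y * tail F y) \<longlongrightarrow> 0) at_top"
      by (rule decay[OF pos tail_le1[OF d] True]) (use rat[of 1] in simp)
    show ?thesis by (rule hyp_Lg[OF rat pos True dec \<epsilon>])
  next
    case False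
    hence "\<gamma> = 0" using cs by auto
    hence "((\<lambda>x. tail F (x - 1) / tail F x) \<longlongrightarrow> 1) at_top" using rat[of 1] by simp
    thus ?thesis by (rule hyp_L0[OF _ pos \<epsilon>])
  qed
  have S: "subexponential (product_distr F GG)" by (rule main_H[OF dF c pos hyp])
  have noO: "TT F \<notin> O(\<lambda>x. tail F (x / t))" if t: "t \<ge> 1" for t
  proof (cases "\<gamma> > 0")
    case True
    have dec: "((\<lambda>y. y * tail F y) \<longlongrightarrow> 0) at_top"
      by (rule decay[OF pos tail_le1[OF d] True]) (use rat[of 1] in simp)
    show ?thesis by (rule noO_g[OF d pos dec t])
  next
    case False
    hence g0: "\<gamma> = 0" and nS: "\<not> subexponential F" using cs by auto
    have "((\<lambda>x. tail F (x - 1) / tail F x) \<longlongrightarrow> 1) at_top" using rat[of 1] g0 by simp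
    thus ?thesis by (rule noO_0[OF dF pos _ nS t])
  qed
  have noD: "\<not> (\<exists>dd\<in>disc_points GG. TT F \<in> O(\<lambda>x. tail F (x / dd)))"
  proof
    assume "\<exists>dd\<in>disc_points GG. TT F \<in> O(\<lambda>x. tail F (x / dd))"
    then obtain dd where dd: "dd > 0" and O: "TT F \<in> O(\<lambda>x. tail F (x / dd))"
      unfolding disc_points_def by blast
    show False
    proof (cases "dd \<ge> 1")
      case True thus False using noO O by blast
    next
      case False
      have "(\<lambda>x. tail F (x / dd)) \<in> O(\<lambda>x. tail F (x / 1))"
      proof (rule landau_o.bigI[of 1])
        show "\<forall>\<^sub>F x in at_top. norm (tail F (x / dd)) \<le> 1 * norm (tail F (x / 1))"
          using eventually_ge_at_top[of 0]
        proof eventually_elim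
          case (elim x)
          have "x / 1 \<le> x / dd" using elim False dd by (intro divide_left_mono) auto
          hence "tail F (x / dd) \<le> tail F (x / 1)" by (rule tail_mono[OF d])
          thus ?case using tail_nonneg[OF d, of "x/dd"] tail_nonneg[OF d, of "x/1"] by simp
        qed
      qed simp
      with O have "TT F \<in> O(\<lambda>x. tail F (x / 1))" by (rule landau_o.big_trans)
      with noO[of 1] show False by simp
    qed
  qed
  show ?thesis
    apply (rule exI[of _ GG])
    using GG_props S noO noD unfolding tH by blast
qed

end
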